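(* Let $X\in\mathcal C$. Then: (1) $\bot\in X$ (the single-leaf bunch); (2) for all bunches $\Delta,\Delta'$, if $\Delta\in X$ then $(\Delta\mathbin{;}\Delta')\in X$; (3) for every bunch $\Delta$, if $(\Delta\mathbin{;}\Delta)\in X$ then $\Delta\in X$; (4) for every bunch $\Delta$, $\Delta\in X$ if and only if $\lfloor\Delta\rfloor\in X$.
   Context: Formulas of BI: $\varphi,\psi ::= \top \mid \bot \mid \varphi\wedge\psi \mid \varphi\vee\psi \mid \varphi\to\psi \mid \mathsf{emp} \mid \varphi\ast\psi \mid \varphi -\!\!\ast\, \psi \mid a$, $a\in\mathrm{Atom}$. Bunches are finite binary trees whose leaves are formulas or empty bunches $\varnothing_m,\varnothing_a$ and whose internal nodes are labelled by the multiplicative comma ($\Delta_1\mathbin{,}\Delta_2$) or the additive semicolon ($\Delta_1\mathbin{;}\Delta_2$). A bunched context $\Delta(-)$ is a bunch with one leaf replaced by a hole; $\Delta(\Gamma)$ fills it with $\Gamma$. Bunch equivalence $\equiv$ is the least equivalence relation making $\mathbin{,}$ commutative, associative with unit $\varnothing_m$, $\mathbin{;}$ commutative, associative with unit $\varnothing_a$, and closed under contexts; $\mathrm{Bunch}$ is the set of bunches modulo $\equiv$. $\lfloor\Delta\rfloor$ is the formula obtained from $\Delta$ by replacing $\mathbin{,}$ by $\ast$, $\varnothing_m$ by $\mathsf{emp}$, $\mathbin{;}$ by $\wedge$, $\varnothing_a$ by $\top$. The cut-free BI sequent calculus ($\Delta\vdash_{\mathsf{cf}}\varphi$) has the rules: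 (ax) $a\vdash a$ for atoms $a$; (equiv) from $\Delta'\vdash\varphi$, $\Delta\equiv\Delta'$ infer $\Delta\vdash\varphi$; (W;) from $\Delta(\Delta_1)\vdash\varphi$ infer $\Delta(\Delta_1\mathbin{;}\Delta_2)\vdash\varphi$; (C;) from $\Delta(\Delta_1\mathbin{;}\Delta_1)\vdash\varphi$ infer $\Delta(\Delta_1)\vdash\varphi$; (empR) $\varnothing_m\vdash\mathsf{emp}$; (empL) from $\Delta(\varnothing_m)\vdash\varphi$ infer $\Delta(\mathsf{emp})\vdash\varphi$; ($\ast$R) from $\Delta_1\vdash\varphi$, $\Delta_2\vdash\psi$ infer $\Delta_1\mathbin{,}\Delta_2\vdash\varphi\ast\psi$; ($\ast$L) from $\Delta(\varphi\mathbin{,}\psi)\vdash\chi$ infer $\Delta(\varphi\ast\psi)\vdash\chi$; ($-\!\ast$R) from $\Delta\mathbin{,}\varphi\vdash\psi$ infer $\Delta\vdash\varphi-\!\!\ast\,\psi$; ($-\!\ast$L) from $\Delta_1\vdash\varphi$, $\Delta(\Delta_2\mathbin{,}\psi)\vdash\chi$ infer $\Delta((\Delta_1\mathbin{,}\Delta_2)\mathbin{,}(\varphi-\!\!\ast\,\psi))\vdash\chi$; ($\top$R) $\varnothing_a\vdash\top$; ($\top$L) from $\Delta(\varnothing_a)\vdash\varphi$ infer $\Delta(\top)\vdash\varphi$; ($\wedge$R) from $\Delta_1\vdash\varphi$, $\Delta_2\vdash\psi$ infer $\Delta_1\mathbin{;}\Delta_2\vdash\varphi\wedge\psi$; ($\wedge$L)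 from $\Delta(\varphi\mathbin{;}\psi)\vdash\chi$ infer $\Delta(\varphi\wedge\psi)\vdash\chi$; ($\to$R) from $\Delta\mathbin{;}\varphi\vdash\psi$ infer $\Delta\vdash\varphi\to\psi$; ($\to$L) from $\Delta_1\vdash\varphi$, $\Delta(\Delta_2\mathbin{;}\psi)\vdash\chi$ infer $\Delta((\Delta_1\mathbin{;}\Delta_2)\mathbin{;}(\varphi\to\psi))\vdash\chi$; ($\bot$L) $\Delta(\bot)\vdash\varphi$; ($\vee$R1/2) from $\Delta\vdash\varphi$ (resp. $\Delta\vdash\psi$) infer $\Delta\vdash\varphi\vee\psi$; ($\vee$L) from $\Delta(\varphi)\vdash\chi$, $\Delta(\psi)\vdash\chi$ infer $\Delta(\varphi\vee\psi)\vdash\chi$. (No cut rule.) For a formula $\varphi$, the principal closed set is $[\![\varphi]\!]^{\mathrm{out}}=\{\Delta\in\mathrm{Bunch}\mid\Delta\vdash_{\mathsf{cf}}\varphi\}$. For $X\subseteq\mathrm{Bunch}$, $\mathrm{cl}(X)=\bigcap\{[\![\varphi]\!]^{\mathrm{out}}\mid X\subseteq[\![\varphi]\!]^{\mathrm{out}}\}$, and $\mathcal C=\{X\subseteq\mathrm{Bunch}\mid X=\mathrm{cl}(X)\}$. A formula regarded as an element of $\mathrm{Bunch}$ is the single-leaf bunch. *)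

theory Defs
  imports Main
begin

datatype 'a fm = FTop | FBot | FAnd "'a fm" "'a fm" | FOr "'a fm" "'a fm" | FImp "'a fm" "'a fm"
  | FEmp | FStar "'a fm" "'a fm" | FWand "'a fm" "'a fm" | FAtom 'a

datatype 'a bunch = BFm "'a fm" | EmpM | EmpA | Comma "'a bunch" "'a bunch" | Semi "'a bunch" "'a bunch"

datatype 'a bctx = Hole | CommaL "'a bctx" "'a bunch" | CommaR "'a bunch" "'a bctx"
  | SemiL "'a bctx" "'a bunch" | SemiR "'a bunch" "'a bctx"

fun fill :: "'a bctx \<Rightarrow> 'a bunch \<Rightarrow> 'a bunch" where
  "fill Hole G = G"
| "fill (CommaL C D) G = Comma (fill C G) D"
| "fill (CommaR D C) G = Comma D (fill C G)"
| "fill (SemiL C D) G = Semi (fill C G) D"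
| "fill (SemiR D C) G = Semi D (fill C G)"

inductive beq :: "'a bunch \<Rightarrow> 'a bunch \<Rightarrow> bool" where
  refl: "beq D D"
| sym: "beq D D' \<Longrightarrow> beq D' D"
| trans: "beq D D' \<Longrightarrow> beq D' D'' \<Longrightarrow> beq D D''"
| comma_comm: "beq (Comma D1 D2) (Comma D2 D1)"
| comma_assoc: "beq (Comma D1 (Comma D2 D3)) (Comma (Comma D1 D2) D3)"
| comma_unit: "beq (Comma D EmpM) D"
| semi_comm: "beq (Semi D1 D2) (Semi D2 D1)"
| semi_assoc: "beq (Semi D1 (Semi D2 D3)) (Semi (Semi D1 D2) D3)"
| semi_unit: "beq (Semi D EmpA) D"
| ctx: "beq D D' \<Longrightarrow> beq (fill C D) (fill C D')"

fun floor_b :: "'a bunch \<Rightarrow> 'a fm" where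
  "floor_b (BFm f) = f"
| "floor_b EmpM = FEmp"
| "floor_b EmpA = FTop"
| "floor_b (Comma D1 D2) = FStar (floor_b D1) (floor_b D2)"
| "floor_b (Semi D1 D2) = FAnd (floor_b D1) (floor_b D2)"

text \<open>Cut-free BI sequent calculus.\<close>
inductive cf :: "'a bunch \<Rightarrow> 'a fm \<Rightarrow> bool" where
  ax: "cf (BFm (FAtom a)) (FAtom a)"
| equiv: "cf D' f \<Longrightarrow> beq D D' \<Longrightarrow> cf D f"
| weakS: "cf (fill C D1) f \<Longrightarrow> cf (fill C (Semi D1 D2)) f"
| contrS: "cf (fill C (Semi D1 D1)) f \<Longrightarrow> cf (fill C D1) f"
| empR: "cf EmpM FEmp"
| empL: "cf (fill C EmpM) f \<Longrightarrow> cf (fill C (BFm FEmp)) f"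
| starR: "cf D1 f \<Longrightarrow> cf D2 g \<Longrightarrow> cf (Comma D1 D2) (FStar f g)"
| starL: "cf (fill C (Comma (BFm f) (BFm g))) h \<Longrightarrow> cf (fill C (BFm (FStar f g))) h"
| wandR: "cf (Comma D (BFm f)) g \<Longrightarrow> cf D (FWand f g)"
| wandL: "cf D1 f \<Longrightarrow> cf (fill C (Comma D2 (BFm g))) h \<Longrightarrow>
          cf (fill C (Comma (Comma D1 D2) (BFm (FWand f g)))) h"
| topR: "cf EmpA FTop"
| topL: "cf (fill C EmpA) f \<Longrightarrow> cf (fill C (BFm FTop)) f"
| andR: "cf D1 f \<Longrightarrow> cf D2 g \<Longrightarrow> cf (Semi D1 D2) (FAnd f g)"
| andL: "cf (fill C (Semi (BFm f) (BFm g))) h \<Longrightarrow> cf (fill C (BFm (FAnd f g))) h"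
| impR: "cf (Semi D (BFm f)) g \<Longrightarrow> cf D (FImp f g)"
| impL: "cf D1 f \<Longrightarrow> cf (fill C (Semi D2 (BFm g))) h \<Longrightarrow>
          cf (fill C (Semi (Semi D1 D2) (BFm (FImp f g)))) h"
| botL: "cf (fill C (BFm FBot)) f"
| orR1: "cf D f \<Longrightarrow> cf D (FOr f g)"
| orR2: "cf D g \<Longrightarrow> cf D (FOr f g)"
| orL: "cf (fill C (BFm f)) h \<Longrightarrow> cf (fill C (BFm g)) h \<Longrightarrow> cf (fill C (BFm (FOr f g))) h"

definition principal :: "'a fm \<Rightarrow> 'a bunch set" where
  "principal f = {D. cf D f}"

definition cl :: "'a bunch set \<Rightarrow> 'a bunch set" where
  "cl X = \<Inter> {principal f | f. X \<subseteq> principal f}"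

definition closed_sets :: "'a bunch set set" where
  "closed_sets = {X. X = cl X}"

end

theory Submission
  imports Defs
begin

fun ccomp :: "'a bctx \<Rightarrow> 'a bctx \<Rightarrow> 'a bctx" where
  "ccomp Hole C2 = C2"
| "ccomp (CommaL C D) C2 = CommaL (ccomp C C2) D"
| "ccomp (CommaR D C) C2 = CommaR D (ccomp C C2)"
| "ccomp (SemiL C D) C2 = SemiL (ccomp C C2) D"
| "ccomp (SemiR D C) C2 = SemiR D (ccomp C C2)"

lemma fill_ccomp[simp]: "fill (ccomp C1 C2) X = fill C1 (fill C2 X)"
  by (induction C1) auto

lemma floor_right: "cf (fill C D) f \<Longrightarrow> cf (fill C (BFm (floor_b D))) f"
proof (induction D arbitrary: C)
  case (BFm x) then show ?case by simp
next
  case EmpM then show ?case using cf.empL by fastforce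
next
  case EmpA then show ?case using cf.topL by fastforce
next
  case (Comma D1 D2)
  have "cf (fill (ccomp C (CommaL Hole D2)) D1) f" using Comma.prems by simp
  then have "cf (fill (ccomp C (CommaL Hole D2)) (BFm (floor_b D1))) f" by (rule Comma.IH(1))
  then have "cf (fill (ccomp C (CommaR (BFm (floor_b D1)) Hole)) D2) f" by simp
  then have "cf (fill (ccomp C (CommaR (BFm (floor_b D1)) Hole)) (BFm (floor_b D2))) f" by (rule Comma.IH(2))
  then have "cf (fill C (Comma (BFm (floor_b D1)) (BFm (floor_b D2)))) f" by simp
  then show ?case using cf.starL by fastforce
next
  case (Semi D1 D2)
  have "cf (fill (ccomp C (SemiL Hole D2)) D1) f" using Semi.prems by simp
  then have "cf (fill (ccomp C (SemiL Hole D2)) (BFm (floor_b D1))) f" by (rule Semi.IH(1))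
  then have "cf (fill (ccomp C (SemiR (BFm (floor_b D1)) Hole)) D2) f" by simp
  then have "cf (fill (ccomp C (SemiR (BFm (floor_b D1)) Hole)) (BFm (floor_b D2))) f" by (rule Semi.IH(2))
  then have "cf (fill C (Semi (BFm (floor_b D1)) (BFm (floor_b D2)))) f" by simp
  then show ?case using cf.andL by fastforce
qed

inductive unf :: "'a bunch \<Rightarrow> 'a bunch \<Rightarrow> bool" where
  urefl: "unf X X"
| ustar: "unf (BFm a) A \<Longrightarrow> unf (BFm b) B \<Longrightarrow> unf (BFm (FStar a b)) (Comma A B)"
| uand: "unf (BFm a) A \<Longrightarrow> unf (BFm b) B \<Longrightarrow> unf (BFm (FAnd a b)) (Semi A B)"
| uemp: "unf (BFm FEmp) EmpM"
| utop: "unf (BFm FTop) EmpA"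
| ucomma: "unf E1 D1 \<Longrightarrow> unf E2 D2 \<Longrightarrow> unf (Comma E1 E2) (Comma D1 D2)"
| usemi: "unf E1 D1 \<Longrightarrow> unf E2 D2 \<Longrightarrow> unf (Semi E1 E2) (Semi D1 D2)"

lemma unf_floor: "unf (BFm (floor_b D)) D"
  by (induction D) (auto intro: unf.intros)

lemma unf_comma: "unf (Comma A B) Y \<Longrightarrow> \<exists>Y1 Y2. Y = Comma Y1 Y2 \<and> unf A Y1 \<and> unf B Y2"
  by (erule unf.cases) (auto intro: unf.intros)

lemma unf_semi: "unf (Semi A B) Y \<Longrightarrow> \<exists>Y1 Y2. Y = Semi Y1 Y2 \<and> unf A Y1 \<and> unf B Y2"
  by (erule unf.cases) (auto intro: unf.intros)

lemma unf_empM: "unf EmpM Y \<Longrightarrow> Y = EmpM"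
  by (erule unf.cases) auto

lemma unf_empA: "unf EmpA Y \<Longrightarrow> Y = EmpA"
  by (erule unf.cases) auto

lemma unf_BFm: "unf (BFm x) Y \<Longrightarrow> Y = BFm x
   \<or> (\<exists>a b A B. x = FStar a b \<and> Y = Comma A B \<and> unf (BFm a) A \<and> unf (BFm b) B)
   \<or> (\<exists>a b A B. x = FAnd a b \<and> Y = Semi A B \<and> unf (BFm a) A \<and> unf (BFm b) B)
   \<or> (x = FEmp \<and> Y = EmpM) \<or> (x = FTop \<and> Y = EmpA)"
  by (erule unf.cases) auto

lemma unf_fill: "unf (fill C X) D \<Longrightarrow> \<exists>C' Y. D = fill C' Y \<and> unf X Y \<and>
    (\<forall>X' Y'. unf X' Y' \<longrightarrow> unf (fill C X') (fill C' Y'))"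
proof (induction C arbitrary: D)
  case Hole then show ?case by (metis fill.simps(1))
next
  case (CommaL C B)
  from unf_comma[OF CommaL.prems[simplified]] obtain Y1 Y2 where
    y: "D = Comma Y1 Y2" "unf (fill C X) Y1" "unf B Y2" by blast
  from CommaL.IH[OF y(2)] obtain C' Y where "Y1 = fill C' Y" "unf X Y"
    "\<forall>X' Y'. unf X' Y' \<longrightarrow> unf (fill C X') (fill C' Y')" by blast
  then show ?case using y by (intro exI[of _ "CommaL C' Y2"] exI[of _ Y]) (auto intro: unf.intros)
next
  case (CommaR B C)
  from unf_comma[OF CommaR.prems[simplified]] obtain Y1 Y2 where
    y: "D = Comma Y1 Y2" "unf B Y1" "unf (fill C X) Y2" by blast
  from CommaR.IH[OF y(3)] obtain C' Y where "Y2 = fill C' Y" "unf X Y"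
    "\<forall>X' Y'. unf X' Y' \<longrightarrow> unf (fill C X') (fill C' Y')" by blast
  then show ?case using y by (intro exI[of _ "CommaR Y1 C'"] exI[of _ Y]) (auto intro: unf.intros)
next
  case (SemiL C B)
  from unf_semi[OF SemiL.prems[simplified]] obtain Y1 Y2 where
    y: "D = Semi Y1 Y2" "unf (fill C X) Y1" "unf B Y2" by blast
  from SemiL.IH[OF y(2)] obtain C' Y where "Y1 = fill C' Y" "unf X Y"
    "\<forall>X' Y'. unf X' Y' \<longrightarrow> unf (fill C X') (fill C' Y')" by blast
  then show ?case using y by (intro exI[of _ "SemiL C' Y2"] exI[of _ Y]) (auto intro: unf.intros)
next
  case (SemiR B C)
  from unf_semi[OF SemiR.prems[simplified]] obtain Y1 Y2 where
    y: "D = Semi Y1 Y2" "unf B Y1" "unf (fill C X) Y2" by blast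
  from SemiR.IH[OF y(3)] obtain C' Y where "Y2 = fill C' Y" "unf X Y"
    "\<forall>X' Y'. unf X' Y' \<longrightarrow> unf (fill C X') (fill C' Y')" by blast
  then show ?case using y by (intro exI[of _ "SemiR Y1 C'"] exI[of _ Y]) (auto intro: unf.intros)
qed

lemma beq_unf: "beq E E' \<Longrightarrow> (\<forall>D. unf E D \<longrightarrow> (\<exists>D'. unf E' D' \<and> beq D D'))
   \<and> (\<forall>D'. unf E' D' \<longrightarrow> (\<exists>D. unf E D \<and> beq D D'))"
proof (induction rule: beq.induct)
  case (refl D) then show ?case by (auto intro: beq.refl)
next
  case (sym D D') then show ?case by (meson beq.sym)
next
  case (trans D D' D'') then show ?case by (meson beq.trans)
next
  case (comma_comm D1 D2) then show ?case
    by (auto dest!: unf_comma intro: unf.intros beq.comma_comm)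
next
  case (comma_assoc D1 D2 D3) show ?case
    by (auto dest!: unf_comma intro: unf.intros beq.comma_assoc)
next
  case (comma_unit D) show ?case
    by (auto dest!: unf_comma unf_empM intro: unf.intros beq.comma_unit)
next
  case (semi_comm D1 D2) then show ?case
    by (auto dest!: unf_semi intro: unf.intros beq.semi_comm)
next
  case (semi_assoc D1 D2 D3) show ?case
    by (auto dest!: unf_semi intro: unf.intros beq.semi_assoc)
next
  case (semi_unit D) show ?case
    by (auto dest!: unf_semi unf_empA intro: unf.intros beq.semi_unit)
next
  case (ctx D D' C)
  show ?case
  proof (intro conjI allI impI)
    fix Z assume "unf (fill C D) Z"
    from unf_fill[OF this] obtain C' Y where h: "Z = fill C' Y" "unf D Y"
      "\<forall>X' Y'. unf X' Y' \<longrightarrow> unf (fill C X') (fill C' Y')" by blast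
    with ctx.IH obtain Y' where "unf D' Y'" "beq Y Y'" by blast
    then show "\<exists>D'a. unf (fill C D') D'a \<and> beq Z D'a" using h by (meson beq.ctx)
  next
    fix Z assume "unf (fill C D') Z"
    from unf_fill[OF this] obtain C' Y where h: "Z = fill C' Y" "unf D' Y"
      "\<forall>X' Y'. unf X' Y' \<longrightarrow> unf (fill C X') (fill C' Y')" by blast
    with ctx.IH obtain Y' where "unf D Y'" "beq Y' Y" by blast
    then show "\<exists>Da. unf (fill C D) Da \<and> beq Da Z" using h by (meson beq.ctx)
  qed
qed

lemma cf_unf: "cf E f \<Longrightarrow> unf E D \<Longrightarrow> cf D f"
proof (induction arbitrary: D rule: cf.induct)
  case (ax a) then show ?case using unf_BFm cf.ax by fastforce
next
  case (equiv D0 f E)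
  then obtain D' where "unf D0 D'" "beq D D'" using beq_unf by blast
  then show ?case using equiv cf.equiv by blast
next
  case (weakS C D1 f D2)
  from unf_fill[OF weakS.prems] obtain C' Y where h: "D = fill C' Y" "unf (Semi D1 D2) Y"
      "\<forall>X' Y'. unf X' Y' \<longrightarrow> unf (fill C X') (fill C' Y')" by blast
  then obtain Y1 Y2 where "Y = Semi Y1 Y2" "unf D1 Y1" using unf_semi by blast
  then show ?case using h weakS.IH cf.weakS by metis
next
  case (contrS C D1 f)
  from unf_fill[OF contrS.prems] obtain C' Y where h: "D = fill C' Y" "unf D1 Y"
      "\<forall>X' Y'. unf X' Y' \<longrightarrow> unf (fill C X') (fill C' Y')" by blast
  then show ?case using contrS.IH cf.contrS usemi by metis
next
  case empR then show ?case using unf_empM cf.empR by blast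
next
  case (empL C f)
  from unf_fill[OF empL.prems] obtain C' Y where h: "D = fill C' Y" "unf (BFm FEmp) Y"
      "\<forall>X' Y'. unf X' Y' \<longrightarrow> unf (fill C X') (fill C' Y')" by blast
  from unf_BFm[OF h(2)] have "Y = BFm FEmp \<or> Y = EmpM" by auto
  then show ?case using h empL.IH cf.empL urefl by metis
next
  case (starR D1 f D2 g)
  then show ?case using unf_comma cf.starR by metis
next
  case (starL C f g h)
  from unf_fill[OF starL.prems] obtain C' Y where h: "D = fill C' Y" "unf (BFm (FStar f g)) Y"
      "\<forall>X' Y'. unf X' Y' \<longrightarrow> unf (fill C X') (fill C' Y')" by blast
  from unf_BFm[OF h(2)] show ?case
  proof (elim disjE)
    assume "Y = BFm (FStar f g)" then show ?thesis using h starL.IH cf.starL urefl by metis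
  next
    assume "\<exists>a b A B. FStar f g = FStar a b \<and> Y = Comma A B \<and> unf (BFm a) A \<and> unf (BFm b) B"
    then show ?thesis using h starL.IH ucomma[of "BFm f" _ "BFm g"] by auto
  qed auto
next
  case (wandR D0 f g)
  then show ?case using cf.wandR ucomma urefl by metis
next
  case (wandL D1 f C D2 g h)
  from unf_fill[OF wandL.prems] obtain C' Y where hh: "D = fill C' Y"
      "unf (Comma (Comma D1 D2) (BFm (FWand f g))) Y"
      "\<forall>X' Y'. unf X' Y' \<longrightarrow> unf (fill C X') (fill C' Y')" by blast
  then obtain Y1 Y2 Y3 where y: "Y = Comma (Comma Y1 Y2) Y3" "unf D1 Y1" "unf D2 Y2"
     "unf (BFm (FWand f g)) Y3" using unf_comma by metis
  then have "Y3 = BFm (FWand f g)" using unf_BFm by fastforce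
  moreover have "cf Y1 f" using wandL.IH(1) y by blast
  moreover have "cf (fill C' (Comma Y2 (BFm g))) h" using wandL.IH(2) hh y ucomma urefl by metis
  ultimately show ?case using hh y cf.wandL by metis
next
  case topR then show ?case using unf_empA cf.topR by blast
next
  case (topL C f)
  from unf_fill[OF topL.prems] obtain C' Y where h: "D = fill C' Y" "unf (BFm FTop) Y"
      "\<forall>X' Y'. unf X' Y' \<longrightarrow> unf (fill C X') (fill C' Y')" by blast
  from unf_BFm[OF h(2)] have "Y = BFm FTop \<or> Y = EmpA" by auto
  then show ?case using h topL.IH cf.topL urefl by metis
next
  case (andR D1 f D2 g)
  then show ?case using unf_semi cf.andR by metis
next
  case (andL C f g h)
  from unf_fill[OF andL.prems] obtain C' Y where h: "D = fill C' Y" "unf (BFm (FAnd f g)) Y"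
      "\<forall>X' Y'. unf X' Y' \<longrightarrow> unf (fill C X') (fill C' Y')" by blast
  from unf_BFm[OF h(2)] show ?case
  proof (elim disjE)
    assume "Y = BFm (FAnd f g)" then show ?thesis using h andL.IH cf.andL urefl by metis
  next
    assume "\<exists>a b A B. FAnd f g = FAnd a b \<and> Y = Semi A B \<and> unf (BFm a) A \<and> unf (BFm b) B"
    then show ?thesis using h andL.IH usemi[of "BFm f" _ "BFm g"] by auto
  qed auto
next
  case (impR D0 f g)
  then show ?case using cf.impR usemi urefl by metis
next
  case (impL D1 f C D2 g h)
  from unf_fill[OF impL.prems] obtain C' Y where hh: "D = fill C' Y"
      "unf (Semi (Semi D1 D2) (BFm (FImp f g))) Y"
      "\<forall>X' Y'. unf X' Y' \<longrightarrow> unf (fill C X') (fill C' Y')" by blast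
  then obtain Y1 Y2 Y3 where y: "Y = Semi (Semi Y1 Y2) Y3" "unf D1 Y1" "unf D2 Y2"
     "unf (BFm (FImp f g)) Y3" using unf_semi by metis
  then have "Y3 = BFm (FImp f g)" using unf_BFm by fastforce
  moreover have "cf Y1 f" using impL.IH(1) y by blast
  moreover have "cf (fill C' (Semi Y2 (BFm g))) h" using impL.IH(2) hh y usemi urefl by metis
  ultimately show ?case using hh y cf.impL by metis
next
  case (botL C f)
  from unf_fill[OF botL.prems] obtain C' Y where h: "D = fill C' Y" "unf (BFm FBot) Y" by blast
  then have "Y = BFm FBot" using unf_BFm by fastforce
  then show ?case using h cf.botL by metis
next
  case (orR1 D0 f g) then show ?case using cf.orR1 by blast
next
  case (orR2 D0 g f) then show ?case using cf.orR2 by blast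
next
  case (orL C f h g)
  from unf_fill[OF orL.prems] obtain C' Y where hh: "D = fill C' Y" "unf (BFm (FOr f g)) Y"
      "\<forall>X' Y'. unf X' Y' \<longrightarrow> unf (fill C X') (fill C' Y')" by blast
  then have "Y = BFm (FOr f g)" using unf_BFm by fastforce
  then show ?case using hh orL.IH cf.orL urefl by metis
qed

lemma mem_closed: "X \<in> closed_sets \<Longrightarrow> D \<in> X \<longleftrightarrow> (\<forall>f. X \<subseteq> principal f \<longrightarrow> cf D f)"
  unfolding closed_sets_def cl_def principal_def by blast

theorem proposition6p2:
  fixes X :: "'a bunch set"
  assumes "X \<in> closed_sets"
  shows "BFm FBot \<in> X
    \<and> (\<forall>D D'. D \<in> X \<longrightarrow> Semi D D' \<in> X)
    \<and> (\<forall>D. Semi D D \<in> X \<longrightarrow> D \<in> X)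
    \<and> (\<forall>D. D \<in> X \<longleftrightarrow> BFm (floor_b D) \<in> X)"
proof (intro conjI allI impI)
  show "BFm FBot \<in> X" unfolding mem_closed[OF assms]
    using cf.botL[of Hole] by auto
next
  fix D D' assume "D \<in> X" then show "Semi D D' \<in> X" unfolding mem_closed[OF assms]
    using cf.weakS[of Hole] by auto
next
  fix D assume "Semi D D \<in> X" then show "D \<in> X" unfolding mem_closed[OF assms]
    using cf.contrS[of Hole] by auto
next
  fix D show "D \<in> X \<longleftrightarrow> BFm (floor_b D) \<in> X" unfolding mem_closed[OF assms]
    using floor_right[of Hole] cf_unf unf_floor by fastforce
qed

end
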